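(* Let $(X,+,d)$ be a complete, locally compact Abelian metric group with translation-invariant metric $d$. Let $A\in K(X)$. If $S(A)=\{0\}$, then the spectre operator $S:K(X)\to K(X)$ is continuous at $A$ with respect to the Pompeiu–Hausdorff metric.
   Context: $d$ satisfies $d(x,y)=d(x+z,y+z)$ for all $x,y,z\in X$; $0$ is the neutral element. $K(X)$ is the family of non-empty compact subsets of $X$ with the Pompeiu–Hausdorff metric $d_H(A,B)=\max\{\sup_{a\in A}d(a,B),\sup_{b\in B}d(A,b)\}$. The spectre of $A\subset X$ is $S(A):=\{z\in X:\ \forall_{a\in A}\ (a+z\in A \text{ or } a-z\in A)\}$; it is compact for compact non-empty $A$. *)

theory Defs
  imports "HOL-Analysis.Analysis"
begin

definition hausdorff_dist :: "'a::metric_space set \<Rightarrow> 'a set \<Rightarrow> real" where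
  "hausdorff_dist A B = max (SUP a\<in>A. infdist a B) (SUP b\<in>B. infdist b A)"

definition spectre :: "'a::ab_group_add set \<Rightarrow> 'a set" where
  "spectre A = {z. \<forall>a\<in>A. a + z \<in> A \<or> a - z \<in> A}"

end

theory Submission
  imports Defs
begin

lemma infdist_lt_obtain:
  assumes "B \<noteq> {}" "infdist x B < d"
  shows "\<exists>b\<in>B. dist x b < d"
proof -
  have "(INF b\<in>B. dist x b) < d" using assms by (simp add: infdist_notempty)
  then show ?thesis using assms(1) by (simp add: cINF_less_iff)
qed

lemma hd_le1:
  assumes "compact A" "a \<in> A"
  shows "infdist a B \<le> hausdorff_dist A B"
proof -
  have "compact ((\<lambda>a. infdist a B) ` A)"
    by (rule compact_continuous_image[OF _ assms(1)]) (intro continuous_intros)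
  then have "bdd_above ((\<lambda>a. infdist a B) ` A)"
    by (intro bounded_imp_bdd_above compact_imp_bounded)
  then have "infdist a B \<le> (SUP a\<in>A. infdist a B)" using assms(2) by (rule cSUP_upper2) simp
  then show ?thesis unfolding hausdorff_dist_def by linarith
qed

lemma hd_le2:
  assumes "compact B" "b \<in> B"
  shows "infdist b A \<le> hausdorff_dist A B"
proof -
  have "compact ((\<lambda>a. infdist a A) ` B)"
    by (rule compact_continuous_image[OF _ assms(1)]) (intro continuous_intros)
  then have "bdd_above ((\<lambda>a. infdist a A) ` B)"
    by (intro bounded_imp_bdd_above compact_imp_bounded)
  then have "infdist b A \<le> (SUP a\<in>B. infdist a A)" using assms(2) by (rule cSUP_upper2) simp
  then show ?thesis unfolding hausdorff_dist_def by linarith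
qed

lemma hd_zero_le:
  fixes S :: "'a::{metric_space, zero} set"
  assumes "0 \<in> S" "\<forall>z\<in>S. dist z 0 \<le> r"
  shows "hausdorff_dist {0} S \<le> r"
proof -
  have "(SUP b\<in>S. infdist b {0}) \<le> r"
    using assms by (intro cSUP_least) auto
  moreover have "0 \<le> r" using assms by force
  ultimately show ?thesis unfolding hausdorff_dist_def using assms(1) by simp
qed

lemma dist_diff_le:
  fixes x y x' y' :: "'a::{metric_space, ab_group_add}"
  assumes ti: "\<forall>x y z::'a. dist x y = dist (x + z) (y + z)"
  shows "dist (x - y) (x' - y') \<le> dist x x' + dist y y'"
proof -
  have "dist (x - y) (x' - y) = dist x x'" using ti[rule_format, of "x - y" "x' - y" y] by simp
  moreover have "dist (x' - y) (x' - y') = dist y' y"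
    using ti[rule_format, of "x' - y" "x' - y'" "y + y' - x'"] by (simp add: algebra_simps)
  ultimately show ?thesis using dist_triangle[of "x - y" "x' - y'" "x' - y"] by (simp add: dist_commute)
qed

lemma dist_add_le:
  fixes x y x' y' :: "'a::{metric_space, ab_group_add}"
  assumes ti: "\<forall>x y z::'a. dist x y = dist (x + z) (y + z)"
  shows "dist (x + y) (x' + y') \<le> dist x x' + dist y y'"
  using dist_diff_le[OF ti, of x "-y" x' "-y'"] dist_diff_le[OF ti, of 0 y 0 y'] by simp

theorem corollary3p9:
  fixes A :: "'a::{metric_space, ab_group_add} set"
  assumes transl_inv: "\<forall>x y z::'a. dist x y = dist (x + z) (y + z)"
    and complete_X: "complete (UNIV :: 'a set)"
    and loc_compact: "locally compact (UNIV :: 'a set)"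
    and A_compact: "compact A" and A_ne: "A \<noteq> {}"
    and spectre_A: "spectre A = {0}"
  shows "\<forall>\<epsilon>>0. \<exists>\<delta>>0. \<forall>B. compact B \<and> B \<noteq> {} \<and> hausdorff_dist A B < \<delta>
           \<longrightarrow> hausdorff_dist (spectre A) (spectre B) < \<epsilon>"
proof (rule ccontr)
  assume "\<not> ?thesis"
  then obtain \<epsilon> :: real where ep: "\<epsilon> > 0" and
    H: "\<forall>\<delta>>0. \<exists>B. compact B \<and> B \<noteq> {} \<and> hausdorff_dist A B < \<delta>
           \<and> \<not> hausdorff_dist (spectre A) (spectre B) < \<epsilon>" by auto
  define \<delta> where "\<delta> n = inverse (real (Suc n))" for n
  have dpos: "\<delta> n > 0" for n unfolding \<delta>_def by simp
  have "\<exists>B z. compact B \<and> B \<noteq> {} \<and> hausdorff_dist A B < \<delta> n \<and> z \<in> spectre B \<and> dist z 0 > \<epsilon>/2" for n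
  proof -
    obtain B where B: "compact B" "B \<noteq> {}" "hausdorff_dist A B < \<delta> n"
      "\<not> hausdorff_dist (spectre A) (spectre B) < \<epsilon>" using H dpos by blast
    have "0 \<in> spectre B" unfolding spectre_def by simp
    have "\<exists>z\<in>spectre B. dist z 0 > \<epsilon>/2"
    proof (rule ccontr)
      assume "\<not> ?thesis"
      then have "hausdorff_dist {0} (spectre B) \<le> \<epsilon>/2"
        using \<open>0 \<in> spectre B\<close> by (intro hd_zero_le) (auto simp: not_less)
      then show False using B(4) spectre_A ep by simp
    qed
    then show ?thesis using B by blast
  qed
  then obtain B z where Bz: "\<And>n. compact (B n)" "\<And>n. B n \<noteq> {}" "\<And>n. hausdorff_dist A (B n) < \<delta> n"
     "\<And>n. z n \<in> spectre (B n)" "\<And>n. dist (z n) 0 > \<epsilon>/2" by metis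
  have near1: "\<exists>b\<in>B n. dist a b < \<delta> n" if "a \<in> A" for a n
    using infdist_lt_obtain[OF Bz(2)] hd_le1[OF A_compact that, of "B n"] Bz(3)[of n] by fastforce
  have near2: "infdist b A < \<delta> n" if "b \<in> B n" for b n
    using hd_le2[OF Bz(1) that, of A] Bz(3)[of n] by linarith
  define D where "D = (\<lambda>p. fst p - snd p) ` (A \<times> A)"
  have cont: "continuous_on (A \<times> A) (\<lambda>p::'a\<times>'a. fst p - snd p)"
    unfolding continuous_on_iff
  proof (intro ballI allI impI)
    fix p e assume "p \<in> A \<times> A" "(e::real) > 0"
    show "\<exists>d>0. \<forall>x'\<in>A \<times> A. dist x' p < d \<longrightarrow> dist (fst x' - snd x') (fst p - snd p) < e"
    proof (intro exI[of _ "e/2"] conjI ballI impI)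
      fix q assume "q \<in> A \<times> A" "dist q p < e/2"
      have "dist (fst q - snd q) (fst p - snd p) \<le> dist (fst q) (fst p) + dist (snd q) (snd p)"
        by (rule dist_diff_le[OF transl_inv])
      also have "\<dots> \<le> dist q p + dist q p" using dist_fst_le[of q p] dist_snd_le[of q p] by linarith
      finally show "dist (fst q - snd q) (fst p - snd p) < e" using \<open>dist q p < e/2\<close> by linarith
    qed (use \<open>e > 0\<close> in simp)
  qed
  have "compact D" unfolding D_def
    by (rule compact_continuous_image[OF cont]) (intro compact_Times A_compact)
  obtain a0 where a0: "a0 \<in> A" using A_ne by blast
  have "\<exists>w\<in>D. dist (z n) w < 2 * \<delta> n" for n
  proof -
    obtain b where b: "b \<in> B n" "dist a0 b < \<delta> n" using near1[OF a0] by blast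
    have "b + z n \<in> B n \<or> b - z n \<in> B n" using Bz(4)[of n] b(1) unfolding spectre_def by blast
    then show ?thesis
    proof
      assume c: "b + z n \<in> B n"
      obtain a' where a': "a' \<in> A" "dist (b + z n) a' < \<delta> n"
        using infdist_lt_obtain[OF A_ne near2[OF c]] by blast
      have "a' - a0 \<in> D" unfolding D_def using a' a0 by force
      moreover have "dist ((b + z n) - b) (a' - a0) \<le> dist (b + z n) a' + dist b a0"
        by (rule dist_diff_le[OF transl_inv])
      ultimately show ?thesis using a' b by (auto simp: dist_commute intro!: bexI[of _ "a' - a0"])
    next
      assume c: "b - z n \<in> B n"
      obtain a' where a': "a' \<in> A" "dist (b - z n) a' < \<delta> n"
        using infdist_lt_obtain[OF A_ne near2[OF c]] by blast
      have "a0 - a' \<in> D" unfolding D_def using a' a0 by force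
      moreover have "dist (b - (b - z n)) (a0 - a') \<le> dist b a0 + dist (b - z n) a'"
        by (rule dist_diff_le[OF transl_inv])
      ultimately show ?thesis using a' b by (auto simp: dist_commute intro!: bexI[of _ "a0 - a'"])
    qed
  qed
  then obtain w where w: "\<And>n. w n \<in> D" "\<And>n. dist (z n) (w n) < 2 * \<delta> n" by metis
  obtain l r where lr: "l \<in> D" "strict_mono r" "(w \<circ> r) \<longlonglongrightarrow> l"
    using seq_compactE[OF compact_imp_seq_compact[OF \<open>compact D\<close>]] w(1) by metis
  have dl: "(\<lambda>n. \<delta> (r n)) \<longlonglongrightarrow> 0"
    using LIMSEQ_subseq_LIMSEQ[OF LIMSEQ_inverse_real_of_nat lr(2)] unfolding \<delta>_def o_def by simp
  have "(\<lambda>n. dist (z (r n)) (w (r n))) \<longlonglongrightarrow> 0"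
  proof (rule tendsto_sandwich[of "\<lambda>n. 0" _ _ "\<lambda>n. 2 * \<delta> (r n)"])
    show "\<forall>\<^sub>F n in sequentially. 0 \<le> dist (z (r n)) (w (r n))" by simp
    show "\<forall>\<^sub>F n in sequentially. dist (z (r n)) (w (r n)) \<le> 2 * \<delta> (r n)"
      using w(2) by (simp add: less_imp_le)
    show "(\<lambda>n. 2 * \<delta> (r n)) \<longlonglongrightarrow> 0" using tendsto_mult_right_zero[OF dl] by simp
  qed simp
  have zl: "(\<lambda>n. z (r n)) \<longlonglongrightarrow> l"
  proof -
    have wl: "(\<lambda>n. dist (w (r n)) l) \<longlonglongrightarrow> 0"
      using tendsto_dist_iff[THEN iffD1, OF lr(3)] unfolding o_def by simp
    have "(\<lambda>n. dist (z (r n)) l) \<longlonglongrightarrow> 0"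
    proof (rule tendsto_sandwich[of "\<lambda>n. 0" _ _ "\<lambda>n. dist (z (r n)) (w (r n)) + dist (w (r n)) l"])
      show "\<forall>\<^sub>F n in sequentially. dist (z (r n)) l \<le> dist (z (r n)) (w (r n)) + dist (w (r n)) l"
        by (simp add: dist_triangle)
      show "(\<lambda>n. dist (z (r n)) (w (r n)) + dist (w (r n)) l) \<longlonglongrightarrow> 0"
        using tendsto_add[OF \<open>(\<lambda>n. dist (z (r n)) (w (r n))) \<longlonglongrightarrow> 0\<close> wl] by simp
    qed simp_all
    then show ?thesis by (rule tendsto_dist_iff[THEN iffD2])
  qed
  have "\<epsilon>/2 \<le> dist l 0"
    by (rule LIMSEQ_le_const[OF tendsto_dist[OF zl tendsto_const]]) (use Bz(5) less_imp_le in blast)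
  then have "l \<noteq> 0" using ep by auto
  have "l \<in> spectre A" unfolding spectre_def
  proof (intro CollectI ballI)
    fix a assume a: "a \<in> A"
    define c where "c = min (infdist (a + l) A) (infdist (a - l) A)"
    have bound: "c \<le> 2 * \<delta> (r n) + dist l (z (r n))" for n
    proof -
      define m where "m = r n"
      obtain b where b: "b \<in> B m" "dist a b < \<delta> m" using near1[OF a] by blast
      have "b + z m \<in> B m \<or> b - z m \<in> B m" using Bz(4)[of m] b(1) unfolding spectre_def by blast
      then have "c \<le> 2 * \<delta> m + dist l (z m)"
      proof
        assume cc: "b + z m \<in> B m"
        have "infdist (a + l) A \<le> infdist (b + z m) A + dist (a + l) (b + z m)" by (rule infdist_triangle)
        moreover have "dist (a + l) (b + z m) \<le> dist a b + dist l (z m)" by (rule dist_add_le[OF transl_inv])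
        ultimately show ?thesis using near2[OF cc] b(2) unfolding c_def by linarith
      next
        assume cc: "b - z m \<in> B m"
        have "infdist (a - l) A \<le> infdist (b - z m) A + dist (a - l) (b - z m)" by (rule infdist_triangle)
        moreover have "dist (a - l) (b - z m) \<le> dist a b + dist l (z m)" by (rule dist_diff_le[OF transl_inv])
        ultimately show ?thesis using near2[OF cc] b(2) unfolding c_def by linarith
      qed
      then show ?thesis unfolding m_def .
    qed
    have "(\<lambda>n. 2 * \<delta> (r n) + dist l (z (r n))) \<longlonglongrightarrow> 0"
    proof -
      have "(\<lambda>n. dist l (z (r n))) \<longlonglongrightarrow> 0"
        using tendsto_dist_iff[THEN iffD1, OF zl] by (simp add: dist_commute)
      then show ?thesis using tendsto_add[OF tendsto_mult_right_zero[OF dl, of 2]] by simp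
    qed
    then have "c \<le> 0" by (rule LIMSEQ_le_const) (use bound in blast)
    then have "infdist (a + l) A = 0 \<or> infdist (a - l) A = 0"
      unfolding c_def using infdist_nonneg[of "a + l" A] infdist_nonneg[of "a - l" A] by linarith
    then show "a + l \<in> A \<or> a - l \<in> A"
      using in_closed_iff_infdist_zero[OF compact_imp_closed[OF A_compact] A_ne] by blast
  qed
  then show False using spectre_A \<open>l \<noteq> 0\<close> by simp
qed

end
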